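(* Let $a=a_0+a_1e_1+a_2e_2+a_3e_3\in C\ell_2$ with $a\neq 0$ and $H_a=0$, let $A=\varphi(a)$ and $$M=\varphi\Big(\frac{a'}{4(a_0^2+a_3^2)}\Big)=\frac{1}{4(a_0^2+a_3^2)}\begin{pmatrix} a_0+a_1 & a_2-a_3\\ a_2+a_3 & a_0-a_1\end{pmatrix}.$$ Then $AMA=A$, $MAM=M$, $(AM)^T=AM$ and $(MA)^T=MA$; that is, $M$ is the Moore–Penrose inverse of $\varphi(a)$.
   Context: $C\ell_2$ is the 4-dimensional real associative algebra with basis $1,e_1,e_2,e_3$ and multiplication $e_1^2=e_2^2=1$, $e_3^2=-1$, $e_1e_2=e_3=-e_2e_1$, $e_1e_3=e_2=-e_3e_1$, $e_3e_2=e_1=-e_2e_3$. For $a=a_0+a_1e_1+a_2e_2+a_3e_3$ ($a_i\in\mathbb{R}$): $a'=a_0+a_1e_1+a_2e_2-a_3e_3$, $H_a=a_0^2-a_1^2-a_2^2+a_3^2$, and $\varphi(a)=\begin{pmatrix} a_0+a_1 & a_2+a_3\\ a_2-a_3 & a_0-a_1\end{pmatrix}\in\mathbb{R}^{2\times 2}$. *)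

theory Defs
  imports "HOL-Analysis.Analysis"
begin

datatype cl2 = Cl2 (c0: real) (c1: real) (c2: real) (c3: real)

definition cl2_zero :: cl2 where "cl2_zero = Cl2 0 0 0 0"

definition cl2_scale :: "real \<Rightarrow> cl2 \<Rightarrow> cl2" where
  "cl2_scale r a = Cl2 (r * c0 a) (r * c1 a) (r * c2 a) (r * c3 a)"

definition cl2_prime :: "cl2 \<Rightarrow> cl2" where
  "cl2_prime a = Cl2 (c0 a) (c1 a) (c2 a) (- c3 a)"

definition H :: "cl2 \<Rightarrow> real" where
  "H a = (c0 a)^2 - (c1 a)^2 - (c2 a)^2 + (c3 a)^2"

definition phi :: "cl2 \<Rightarrow> real^2^2" where
  "phi a = (\<chi> i j. if i = 1 then (if j = 1 then c0 a + c1 a else c2 a + c3 a)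
                           else (if j = 1 then c2 a - c3 a else c0 a - c1 a))"

end

theory Submission
  imports Defs
begin

theorem theorem3p4:
  fixes a :: cl2
  assumes "a \<noteq> cl2_zero" and "H a = 0"
  defines "A \<equiv> phi a"
      and "M \<equiv> phi (cl2_scale (1 / (4 * ((c0 a)^2 + (c3 a)^2))) (cl2_prime a))"
  shows "A ** M ** A = A \<and> M ** A ** M = M \<and>
         transpose (A ** M) = A ** M \<and> transpose (M ** A) = M ** A"
proof -
  obtain x y z w where a: "a = Cl2 x y z w" by (cases a)
  have h: "x^2 + w^2 = y^2 + z^2" using assms(2) unfolding a H_def by simp
  have s: "x^2 + w^2 \<noteq> 0"
  proof
    assume "x^2 + w^2 = 0"
    hence "x = 0" "w = 0" "y = 0" "z = 0" using h by (auto simp: add_nonneg_eq_0_iff)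
    thus False using assms(1) a cl2_zero_def by simp
  qed
  define k where "k = 1 / (4 * (x^2 + w^2))"
  have hk: "k * (4 * (x^2 + w^2)) = 1" using s unfolding k_def by (metis (no_types) mult_eq_0_iff nonzero_divide_eq_eq zero_neq_numeral)
  have M: "M = phi (Cl2 (k*x) (k*y) (k*z) (-(k*w)))"
    unfolding M_def a k_def cl2_scale_def cl2_prime_def by simp
  show ?thesis
    unfolding A_def M a phi_def
    apply (simp add: vec_eq_iff matrix_matrix_mult_def transpose_def forall_2 UNIV_2)
    apply (intro conjI)
    using h hk by algebra+
qed

end
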